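(* There exist constants $\kappa_{16},\kappa_{18}>0$, depending only on $N,\gamma,\beta$, such that for any $y\in\mathbb R^N$ and any $R>0$, $$\kappa_{16}^{-1}\rho^{\gamma,\beta}_y(R)\le R^2\frac{\mu_\gamma(B_R(y))}{\mu_\beta(B_R(y))}\le\kappa_{16}\rho^{\gamma,\beta}_y(R)$$ and $$\kappa_{18}^{-1}R^2[R\vee|y|]^{\beta-\gamma}\le\rho^{\gamma,\beta}_y(R)\le\kappa_{18}R^2[R\vee|y|]^{\beta-\gamma}.$$
   Context: $N\ge3$ and $\gamma,\beta\in\mathbb R$ satisfy $\gamma<N$ and $\gamma-2<\beta\le\frac{N-2}{N}\gamma$. For $\alpha\in\mathbb R$ and measurable $E$, $\mu_\alpha(E)=\int_E|x|^{-\alpha}dx$. $\rho^{\gamma,\beta}_y(R)=\big(\int_{B_R(y)}|x|^{(\beta-\gamma)N/2}dx\big)^{2/N}$. $a\vee b=\max\{a,b\}$. *)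

theory Defs
  imports "HOL-Analysis.Analysis"
begin

definition mu_w :: "real \<Rightarrow> (real ^ 'n) set \<Rightarrow> real" where
  "mu_w \<alpha> E = (LINT x : E | lborel. norm x powr (- \<alpha>))"

definition rho_w :: "real \<Rightarrow> real \<Rightarrow> real ^ 'n \<Rightarrow> real \<Rightarrow> real" where
  "rho_w \<gamma> \<beta> y R =
     (LINT x : ball y R | lborel. norm x powr ((\<beta> - \<gamma>) * real CARD('n) / 2))
       powr (2 / real CARD('n))"

end

theory Submission
  imports Defs
begin


definition G :: "real \<Rightarrow> (real ^ 'n) set \<Rightarrow> ennreal" where
  "G a A = (\<integral>\<^sup>+x. ennreal (indicator A x * norm x powr a) \<partial>lborel)"

lemma ennreal_le_suminf: "(f i :: ennreal) \<le> (\<Sum>i. f i)"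
  by (metis ennreal_suminf_lessD not_le less_irrefl)

lemma G_mono: "A \<subseteq> B \<Longrightarrow> G a A \<le> G a B"
  unfolding G_def by (intro nn_integral_mono ennreal_leI) (auto simp: indicator_def)

lemma G_lower:
  assumes "A \<in> sets borel" "l \<ge> 0" "\<And>x. x \<in> A \<Longrightarrow> l \<le> norm x powr a"
  shows "ennreal l * emeasure lborel A \<le> G a A"
proof -
  have "ennreal l * emeasure lborel A = (\<integral>\<^sup>+x. ennreal l * indicator A x \<partial>lborel)"
    using assms(1) by (simp add: nn_integral_cmult_indicator)
  also have "\<dots> \<le> G a A" unfolding G_def
    by (intro nn_integral_mono) (auto simp: indicator_def assms(3))
  finally show ?thesis .
qed

lemma G_upper:
  assumes "A \<in> sets borel" "\<And>x. x \<in> A \<Longrightarrow> norm x powr a \<le> u"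
  shows "G a A \<le> ennreal u * emeasure lborel A"
proof -
  have "G a A \<le> (\<integral>\<^sup>+x. ennreal u * indicator A x \<partial>lborel)" unfolding G_def
    by (intro nn_integral_mono) (auto simp: indicator_def assms(2) intro!: ennreal_leI)
  also have "\<dots> = ennreal u * emeasure lborel A"
    using assms(1) by (simp add: nn_integral_cmult_indicator)
  finally show ?thesis .
qed

lemma G_LINT:
  fixes A :: "(real ^ 'n) set"
  assumes "A \<in> sets borel" "lo \<ge> 0" "hi \<ge> 0" "ennreal lo \<le> G a A" "G a A \<le> ennreal hi"
  shows "lo \<le> (LINT x : A | lborel. norm x powr a) \<and> (LINT x : A | lborel. norm x powr a) \<le> hi"
proof -
  have meas: "(\<lambda>x. indicator A x * norm x powr a) \<in> borel_measurable lborel"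
    using assms(1) by measurable
  have int: "integrable lborel (\<lambda>x. indicator A x * norm x powr a)"
  proof (rule integrableI_bounded)
    have "(\<integral>\<^sup>+ x. ennreal (norm (indicator A x * norm x powr a)) \<partial>lborel) = G a A"
      unfolding G_def by (intro nn_integral_cong) (auto simp: indicator_def)
    also have "\<dots> < \<infinity>" using assms(5) by (metis ennreal_less_top infinity_ennreal_def le_less_trans)
    finally show "(\<integral>\<^sup>+ x. ennreal (norm (indicator A x * norm x powr a)) \<partial>lborel) < \<infinity>" .
  qed (rule meas)
  have eq: "G a A = ennreal (LINT x : A | lborel. norm x powr a)"
    unfolding G_def set_lebesgue_integral_def using int
    by (subst nn_integral_eq_integral) (auto simp: indicator_def)
  have nn: "0 \<le> (LINT x : A | lborel. norm x powr a)"
    unfolding set_lebesgue_integral_def by (auto intro!: integral_nonneg simp: indicator_def)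
  show ?thesis using assms(2-5) nn unfolding eq
    by (simp add: ennreal_le_iff)
qed

lemma pow2_powr: "((2::real) ^ k) powr a = (2 powr a) ^ k"
proof -
  have "((2::real) ^ k) powr a = (2 powr real k) powr a" by (simp add: powr_realpow)
  also have "\<dots> = 2 powr (real k * a)" by (simp add: powr_powr)
  also have "\<dots> = (2 powr a) ^ k" by (simp add: powr_power)
  finally show ?thesis .
qed

lemma G_dyadic:
  fixes r a :: real
  assumes r: "r > 0" and a: "a < 0" "a > - real CARD('n)"
  defines "V \<equiv> unit_ball_vol (real CARD('n))" and "q \<equiv> 2 powr (-a) / 2 ^ CARD('n)"
  shows "G a (ball (0::real^'n) r) \<le> ennreal (V * r powr a * r ^ CARD('n) * 2 powr (-a) / (1 - q))"
proof -
  define N where "N = CARD('n)"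
  define w where "w k = (r / 2^(k+1)) powr a" for k :: nat
  have "2 powr (-a) < 2 powr (real N)" using a by (intro powr_less_mono) (auto simp: N_def)
  hence q: "0 < q" "q < 1" unfolding q_def N_def by (auto simp: powr_realpow)
  have pt: "ennreal (indicator (ball 0 r) x * norm x powr a)
      \<le> (\<Sum>k. ennreal (w k) * indicator (ball (0::real^'n) (r/2^k)) x)" for x
  proof (cases "x \<in> ball 0 r \<and> x \<noteq> 0")
    case False then show ?thesis by (auto simp: indicator_def)
  next
    case True
    hence x: "0 < norm x" "norm x < r" by auto
    obtain k0 :: nat where k0: "r / norm x < 2 ^ k0" using real_arch_pow[of 2 "r / norm x"] by auto
    have ex: "r / 2^(k0+1) \<le> norm x"
    proof -
      have "r < 2 ^ k0 * norm x" using k0 x by (simp add: field_simps)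
      moreover have "0 \<le> 2 ^ k0 * norm x" by simp
      ultimately have "r \<le> 2 * (2 ^ k0 * norm x)" by linarith
      hence "r \<le> 2 ^ (k0+1) * norm x" by (simp add: mult.assoc)
      thus ?thesis by (simp add: field_simps)
    qed
    define k where "k = (LEAST k. r / 2^(k+1) \<le> norm x)"
    have k1: "r / 2^(k+1) \<le> norm x" unfolding k_def by (rule LeastI[of _ k0]) (rule ex)
    have k2: "norm x < r / 2^k"
    proof (cases k)
      case 0 then show ?thesis using x by simp
    next
      case (Suc j)
      have "\<not> r / 2^(j+1) \<le> norm x" using not_less_Least[of j "\<lambda>k. r / 2^(k+1) \<le> norm x"] Suc k_def by auto
      then show ?thesis using Suc by simp
    qed
    have "norm x powr a \<le> w k" unfolding w_def
      by (rule powr_mono2') (use a k1 r in auto)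
    then have "ennreal (indicator (ball 0 r) x * norm x powr a) \<le> ennreal (w k) * indicator (ball (0::real^'n) (r/2^k)) x"
      using k2 True by (auto simp: indicator_def intro!: ennreal_leI)
    also have "\<dots> \<le> (\<Sum>k. ennreal (w k) * indicator (ball (0::real^'n) (r/2^k)) x)"
      by (rule ennreal_le_suminf)
    finally show ?thesis .
  qed
  have "G a (ball (0::real^'n) r) \<le> (\<integral>\<^sup>+x. (\<Sum>k. ennreal (w k) * indicator (ball (0::real^'n) (r/2^k)) x) \<partial>lborel)"
    unfolding G_def using pt by (simp add: nn_integral_mono)
  also have "\<dots> = (\<Sum>k. \<integral>\<^sup>+x. ennreal (w k) * indicator (ball (0::real^'n) (r/2^k)) x \<partial>lborel)"
    by (intro nn_integral_suminf) (auto intro!: borel_measurable_times_ennreal borel_measurable_indicator)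
  also have "\<dots> = (\<Sum>k. ennreal (w k * (V * (r/2^k)^N)))"
    using r by (simp add: nn_integral_cmult_indicator emeasure_ball V_def N_def ennreal_mult' w_def)
  also have "(\<lambda>k. w k * (V * (r/2^k)^N)) = (\<lambda>k. (V * r powr a * r ^ N * 2 powr (-a)) * q ^ k)"
  proof
    fix k :: nat
    have "w k = r powr a * (2 powr (-a)) ^ (k+1)"
      unfolding w_def powr_divide pow2_powr by (simp add: powr_minus power_inverse divide_inverse)
    moreover have "(r/2^k)^N = r^N / (2^N)^k"
      by (simp add: power_divide power_mult[symmetric] mult.commute)
    ultimately show "w k * (V * (r/2^k)^N) = (V * r powr a * r ^ N * 2 powr (-a)) * q ^ k"
      unfolding q_def by (simp add: power_divide field_simps N_def)
  qed
  also have "(\<Sum>k. ennreal ((V * r powr a * r ^ N * 2 powr (-a)) * q ^ k))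
      = ennreal (\<Sum>k. (V * r powr a * r ^ N * 2 powr (-a)) * q ^ k)"
    using q r by (intro suminf_ennreal2) (auto simp: V_def intro!: summable_mult summable_geometric)
  also have "(\<Sum>k. (V * r powr a * r ^ N * 2 powr (-a)) * q ^ k) = V * r powr a * r ^ N * 2 powr (-a) / (1 - q)"
    using q by (subst suminf_mult) (auto simp: suminf_geometric intro!: summable_geometric)
  finally show ?thesis unfolding N_def .
qed

lemma G_lower_bound:
  fixes a R :: real and y :: "real ^ 'n"
  assumes R: "R > 0"
  defines "V \<equiv> unit_ball_vol (real CARD('n))"
  shows "ennreal (V * (1 - (1/4) ^ CARD('n)) * min ((1/8) powr a) (2 powr a)
           * R ^ CARD('n) * max R (norm y) powr a) \<le> G a (ball y R)"
proof -
  define N where "N = CARD('n)"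
  define M where "M = max R (norm y)"
  have M: "M > 0" "R \<le> M" "norm y \<le> M" using R by (auto simp: M_def)
  define D where "D = ball y R - ball (0::real^'n) (R/4)"
  have Dsets: "D \<in> sets borel" unfolding D_def by auto
  define m where "m = min ((1/8) powr a) (2 powr a)"
  have pt: "M powr a * m \<le> norm x powr a" if "x \<in> D" for x
  proof -
    have x1: "R/4 \<le> norm x" and x2: "dist y x < R" using that by (auto simp: D_def)
    have "norm y \<le> norm x + dist y x" by (metis dist_norm norm_triangle_sub norm_minus_commute)
    hence "M/8 \<le> norm x" "norm x \<le> 2 * M" using x1 x2 M R unfolding M_def
      by (auto simp: dist_norm) (smt (verit) norm_minus_commute norm_triangle_sub)+
    hence "min ((M/8) powr a) ((2*M) powr a) \<le> norm x powr a"
    proof (cases "a \<ge> 0")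
      case True
      then have "(M/8) powr a \<le> norm x powr a" using M \<open>M/8 \<le> norm x\<close> by (intro powr_mono2) auto
      then show ?thesis by (simp add: min_le_iff_disj)
    next
      case False
      then have "(2*M) powr a \<le> norm x powr a" using M \<open>M/8 \<le> norm x\<close> \<open>norm x \<le> 2 * M\<close>
        by (intro powr_mono2') auto
      then show ?thesis by (simp add: min_le_iff_disj)
    qed
    moreover have "(M/8) powr a = M powr a * (1/8) powr a" "(2*M) powr a = M powr a * 2 powr a"
      by (simp_all add: powr_mult powr_divide)
    ultimately show ?thesis unfolding m_def by (simp add: min_mult_distrib_left)
  qed
  have mpos: "m \<ge> 0" unfolding m_def by simp
  have eball: "emeasure lborel (ball c r) = ennreal (V * r ^ N)" if "r \<ge> 0" for c :: "real^'n" and r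
    using that by (simp add: emeasure_ball V_def N_def)
  have "emeasure lborel D \<le> emeasure lborel (ball y R)" unfolding D_def by (intro emeasure_mono) auto
  hence "emeasure lborel D < \<infinity>" using emeasure_lborel_ball_finite[of y R] by (simp add: le_less_trans)
  then obtain d where d: "emeasure lborel D = ennreal d" "d \<ge> 0"
    by (metis emeasure_eq_ennreal_measure infinity_ennreal_def less_irrefl measure_nonneg)
  have "ennreal (V * R ^ N) \<le> emeasure lborel (D \<union> ball 0 (R/4))"
    using R by (subst eball[symmetric]) (auto intro!: emeasure_mono simp: D_def)
  also have "\<dots> \<le> emeasure lborel D + emeasure lborel (ball (0::real^'n) (R/4))"
    by (rule emeasure_subadditive) (auto simp: Dsets)
  also have "\<dots> = ennreal (d + V * (R/4) ^ N)" using R d by (simp add: eball ennreal_plus V_def)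
  finally have "V * R ^ N \<le> d + V * (R/4) ^ N" using d R
    by (subst (asm) ennreal_le_iff) (auto simp: V_def)
  hence dlow: "V * (1 - (1/4) ^ N) * R ^ N \<le> d" by (simp add: power_divide field_simps)
  have "ennreal (V * (1 - (1/4) ^ N) * m * R ^ N * M powr a) = ennreal (M powr a * m) * ennreal (V * (1 - (1/4) ^ N) * R ^ N)"
    using mpos R power_le_one[of "1/4::real" N]
    by (subst ennreal_mult[symmetric]) (auto simp: V_def mult_ac intro!: mult_nonneg_nonneg)
  also have "\<dots> \<le> ennreal (M powr a * m) * emeasure lborel D"
    using dlow d by (intro mult_left_mono) auto
  also have "\<dots> \<le> G a D" by (rule G_lower[OF Dsets]) (use mpos pt in auto)
  also have "\<dots> \<le> G a (ball y R)" by (rule G_mono) (auto simp: D_def)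
  finally show ?thesis unfolding m_def M_def N_def .
qed

lemma G_upper_bound:
  fixes a :: real
  assumes a: "a > - real CARD('n)"
  shows "\<exists>C>0. \<forall>(y::real^'n) R. R > 0 \<longrightarrow> G a (ball y R) \<le> ennreal (C * R ^ CARD('n) * max R (norm y) powr a)"
proof -
  define N where "N = CARD('n)"
  define V where "V = unit_ball_vol (real CARD('n))"
  have Vpos: "V > 0" unfolding V_def by simp
  have eball: "emeasure lborel (ball c r) = ennreal (V * r ^ N)" if "r \<ge> 0" for c :: "real^'n" and r
    using that by (simp add: emeasure_ball V_def N_def)
  show ?thesis
  proof (cases "a \<ge> 0")
    case True
    show ?thesis
    proof (intro exI[of _ "V * 2 powr a"] conjI allI impI)
      show "V * 2 powr a > 0" using Vpos by simp
      fix y :: "real^'n" and R :: real assume R: "R > 0"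
      define M where "M = max R (norm y)"
      have M: "M > 0" "R \<le> M" "norm y \<le> M" using R by (auto simp: M_def)
      have "G a (ball y R) \<le> ennreal ((2*M) powr a) * emeasure lborel (ball y R)"
      proof (rule G_upper)
        fix x assume "x \<in> ball y R"
        hence "dist y x < R" by simp
        moreover have "norm x \<le> norm y + dist y x" using norm_triangle_ineq4[of y "y - x"] by (simp add: dist_norm)
        ultimately have "norm x \<le> 2 * M" using M by linarith
        thus "norm x powr a \<le> (2*M) powr a" using True by (intro powr_mono2) auto
      qed auto
      also have "\<dots> = ennreal (V * 2 powr a * R ^ N * M powr a)"
      proof -
        have "ennreal ((2*M) powr a) * emeasure lborel (ball y R) = ennreal ((2*M) powr a * (V * R ^ N))"
          using R Vpos by (simp add: eball ennreal_mult'[symmetric])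
        also have "(2*M) powr a * (V * R ^ N) = V * 2 powr a * R ^ N * M powr a"
          unfolding powr_mult by (simp add: algebra_simps)
        finally show ?thesis .
      qed
      finally show "G a (ball y R) \<le> ennreal (V * 2 powr a * R ^ CARD('n) * max R (norm y) powr a)"
        unfolding M_def N_def .
    qed
  next
    case False
    hence a0: "a < 0" by simp
    define q where "q = 2 powr (-a) / 2 ^ CARD('n)"
    have "2 powr (-a) < 2 powr (real N)" using a by (intro powr_less_mono) (auto simp: N_def)
    hence q: "0 < q" "q < 1" unfolding q_def N_def by (auto simp: powr_realpow)
    define C where "C = V * 2 powr (-a) * 3 ^ N / (1 - q)"
    have C1: "V * 2 powr (-a) \<le> C"
    proof -
      have h3: "(1::real) \<le> 3 ^ N" by (simp add: one_le_power)
      have "V * 2 powr (-a) * 1 \<le> V * 2 powr (-a) * (3 ^ N / (1 - q))"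
        proof (intro mult_left_mono)
        have "1 - q \<le> 3 ^ N" using h3 q by linarith
        thus "1 \<le> 3 ^ N / (1 - q)" using q by (simp add: le_divide_eq)
      qed (use Vpos in auto)
      thus ?thesis by (simp add: C_def)
    qed
    show ?thesis
    proof (intro exI[of _ C] conjI allI impI)
      show "C > 0" using q Vpos by (simp add: C_def)
      fix y :: "real^'n" and R :: real assume R: "R > 0"
      define M where "M = max R (norm y)"
      have M: "M > 0" "R \<le> M" "norm y \<le> M" using R by (auto simp: M_def)
      have "G a (ball y R) \<le> ennreal (C * R ^ N * M powr a)"
      proof (cases "norm y \<ge> 2 * R")
        case True
        have "G a (ball y R) \<le> ennreal ((M/2) powr a) * emeasure lborel (ball y R)"
        proof (rule G_upper)
          fix x assume "x \<in> ball y R"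
          hence "dist y x < R" by simp
          moreover have "norm y \<le> norm x + dist y x" by (metis dist_norm norm_triangle_sub norm_minus_commute)
          moreover have "M = norm y" using True R by (simp add: M_def)
          ultimately have "M / 2 \<le> norm x" using True by linarith
          thus "norm x powr a \<le> (M/2) powr a" using a0 M by (intro powr_mono2') auto
        qed auto
        also have "\<dots> = ennreal (V * 2 powr (-a) * R ^ N * M powr a)"
        proof -
          have eq: "(M/2) powr a = 2 powr (-a) * M powr a"
            by (metis powr_divide powr_minus divide_inverse mult.commute)
          have "ennreal ((M/2) powr a) * emeasure lborel (ball y R) = ennreal ((M/2) powr a * (V * R ^ N))"
            using R Vpos by (simp add: eball ennreal_mult'[symmetric])
          also have "(M/2) powr a * (V * R ^ N) = V * 2 powr (-a) * R ^ N * M powr a"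
            unfolding eq by (simp add: algebra_simps)
          finally show ?thesis .
        qed
        also have "\<dots> \<le> ennreal (C * R ^ N * M powr a)"
          using C1 R by (intro ennreal_leI mult_right_mono) auto
        finally show ?thesis .
      next
        case False
        have "G a (ball y R) \<le> G a (ball (0::real^'n) (3 * R))"
        proof (rule G_mono, rule subsetI)
          fix x assume "x \<in> ball y R"
          hence "dist y x < R" by simp
          moreover have "norm x \<le> norm y + dist y x" using norm_triangle_ineq4[of y "y - x"] by (simp add: dist_norm)
          ultimately have "norm x < 3 * R" using False by linarith
          thus "x \<in> ball 0 (3 * R)" by simp
        qed
        also have "\<dots> \<le> ennreal (V * (3*R) powr a * (3*R) ^ N * 2 powr (-a) / (1 - q))"
          using G_dyadic[of "3*R" a] R a0 a unfolding V_def q_def N_def by simp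
        also have "\<dots> \<le> ennreal (C * R ^ N * M powr a)"
        proof (rule ennreal_leI)
          have "M \<le> 3 * R" using False R unfolding M_def by simp
          hence "(3*R) powr a \<le> M powr a" using a0 M by (intro powr_mono2') auto
          hence "V * (3*R) powr a * (3^N * R ^ N) * 2 powr (-a) / (1 - q) \<le> V * M powr a * (3^N * R ^ N) * 2 powr (-a) / (1 - q)"
            using q Vpos R by (intro divide_right_mono mult_right_mono mult_left_mono) auto
          thus "V * (3*R) powr a * (3*R) ^ N * 2 powr (-a) / (1 - q) \<le> C * R ^ N * M powr a"
            by (simp add: C_def power_mult_distrib field_simps)
        qed
        finally show ?thesis .
      qed
      thus "G a (ball y R) \<le> ennreal (C * R ^ CARD('n) * max R (norm y) powr a)" unfolding M_def N_def .
    qed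
  qed
qed

lemma I_bounds:
  fixes a :: real
  assumes a: "a > - real CARD('n)"
  shows "\<exists>c C. c > 0 \<and> C > 0 \<and> (\<forall>(y::real^'n) R. R > 0 \<longrightarrow>
     c * (R ^ CARD('n) * max R (norm y) powr a) \<le> (LINT x : ball y R | lborel. norm x powr a) \<and>
     (LINT x : ball y R | lborel. norm x powr a) \<le> C * (R ^ CARD('n) * max R (norm y) powr a))"
proof -
  obtain C where C: "C > 0" "\<And>(y::real^'n) R. R > 0 \<Longrightarrow> G a (ball y R) \<le> ennreal (C * R ^ CARD('n) * max R (norm y) powr a)"
    using G_upper_bound[OF a] by blast
  define c where "c = unit_ball_vol (real CARD('n)) * (1 - (1/4) ^ CARD('n)) * min ((1/8) powr a) (2 powr a)"
  have "(1/4::real) ^ CARD('n) < 1" by (simp add: power_less_one_iff)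
  hence cpos: "c > 0" unfolding c_def by (auto intro!: mult_pos_pos)
  have "\<forall>(y::real^'n) R. R > 0 \<longrightarrow>
     c * (R ^ CARD('n) * max R (norm y) powr a) \<le> (LINT x : ball y R | lborel. norm x powr a) \<and>
     (LINT x : ball y R | lborel. norm x powr a) \<le> C * (R ^ CARD('n) * max R (norm y) powr a)"
  proof (intro allI impI)
    fix y :: "real^'n" and R :: real assume R: "R > 0"
    have M: "max R (norm y) > 0" using R by auto
    have "c * (R ^ CARD('n) * max R (norm y) powr a) \<le> (LINT x : ball y R | lborel. norm x powr a) \<and>
     (LINT x : ball y R | lborel. norm x powr a) \<le> C * (R ^ CARD('n) * max R (norm y) powr a)"
    proof (rule G_LINT)
      show "0 \<le> c * (R ^ CARD('n) * max R (norm y) powr a)" using cpos R by simp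
      show "0 \<le> C * (R ^ CARD('n) * max R (norm y) powr a)" using C(1) R by simp
      show "ennreal (c * (R ^ CARD('n) * max R (norm y) powr a)) \<le> G a (ball y R)"
        using G_lower_bound[OF R, of a y] unfolding c_def by (simp add: mult.assoc)
      show "G a (ball y R) \<le> ennreal (C * (R ^ CARD('n) * max R (norm y) powr a))"
        using C(2)[OF R, of y] by (simp add: mult.assoc)
    qed auto
    thus "c * (R ^ CARD('n) * max R (norm y) powr a) \<le> (LINT x : ball y R | lborel. norm x powr a) \<and>
     (LINT x : ball y R | lborel. norm x powr a) \<le> C * (R ^ CARD('n) * max R (norm y) powr a)" .
  qed
  thus ?thesis using cpos C(1) by blast
qed


lemma final_arith:
  fixes P \<rho> Q p1 p2 q1 q2 :: real
  assumes pos: "P > 0" "p1 > 0" "p2 > 0" "q1 > 0" "q2 > 0"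
    and h: "p1*P \<le> \<rho>" "\<rho> \<le> p2*P" "q1*P \<le> Q" "Q \<le> q2*P"
  shows "\<rho> / max (p2/q1) (q2/p1) \<le> Q \<and> Q \<le> max (p2/q1) (q2/p1) * \<rho>
    \<and> P / max p2 (1/p1) \<le> \<rho> \<and> \<rho> \<le> max p2 (1/p1) * P"
proof -
  define k where "k = max (p2/q1) (q2/p1)"
  define l where "l = max p2 (1/p1)"
  have kpos: "k > 0" "p2/q1 \<le> k" "q2/p1 \<le> k" using pos by (auto simp: k_def less_max_iff_disj)
  have lpos: "l > 0" "p2 \<le> l" "1/p1 \<le> l" using pos by (auto simp: l_def less_max_iff_disj)
  have "\<rho> \<le> (p2/q1) * (q1*P)" using h pos by simp
  also have "\<dots> \<le> k * Q" using kpos h pos by (intro mult_mono) auto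
  finally have 1: "\<rho> / k \<le> Q" using kpos by (simp add: divide_le_eq mult.commute)
  have "Q \<le> (q2/p1) * (p1*P)" using h pos by simp
  also have "\<dots> \<le> k * \<rho>" using kpos h pos by (intro mult_mono) auto
  finally have 2: "Q \<le> k * \<rho>" .
  have "P = (1/p1) * (p1*P)" using pos by simp
  also have "\<dots> \<le> l * \<rho>" using lpos h pos by (intro mult_mono) auto
  finally have 3: "P / l \<le> \<rho>" using lpos by (simp add: divide_le_eq mult.commute)
  have 4: "\<rho> \<le> l * P" using h lpos pos by (meson mult_right_mono less_imp_le order_trans)
  show ?thesis using 1 2 3 4 unfolding k_def l_def by blast
qed

theorem lemma5p2:
  fixes \<gamma> \<beta> :: real
  assumes "CARD('n::finite) \<ge> 3"
    and "\<gamma> < real CARD('n)"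
    and "\<gamma> - 2 < \<beta>"
    and "\<beta> \<le> (real CARD('n) - 2) / real CARD('n) * \<gamma>"
  shows "\<exists>\<kappa>16 > 0. \<exists>\<kappa>18 > 0. \<forall>(y :: real ^ 'n) R. R > 0 \<longrightarrow>
     (rho_w \<gamma> \<beta> y R / \<kappa>16 \<le> R\<^sup>2 * mu_w \<gamma> (ball y R) / mu_w \<beta> (ball y R)
      \<and> R\<^sup>2 * mu_w \<gamma> (ball y R) / mu_w \<beta> (ball y R) \<le> \<kappa>16 * rho_w \<gamma> \<beta> y R)
   \<and> (R\<^sup>2 * (max R (norm y)) powr (\<beta> - \<gamma>) / \<kappa>18 \<le> rho_w \<gamma> \<beta> y R
      \<and> rho_w \<gamma> \<beta> y R \<le> \<kappa>18 * R\<^sup>2 * (max R (norm y)) powr (\<beta> - \<gamma>))"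
proof -
  define n where "n = real CARD('n)"
  have n3: "n \<ge> 3" using assms(1) unfolding n_def by simp
  have bN: "\<beta> < n"
  proof (cases "\<gamma> \<le> 0")
    case True
    have "(n - 2) / n * \<gamma> \<le> 0" using n3 True by (intro mult_nonneg_nonpos) auto
    thus ?thesis using assms(4) n3 unfolding n_def by linarith
  next
    case False
    have "(n - 2) / n * \<gamma> \<le> 1 * \<gamma>" using n3 False by (intro mult_right_mono) auto
    thus ?thesis using assms(2,4) n3 unfolding n_def by linarith
  qed
  define a3 where "a3 = (\<beta> - \<gamma>) * n / 2"
  have a3: "a3 > - n"
  proof -
    have h: "0 < (\<beta> - \<gamma> + 2) * n" using assms(3) n3 by (intro mult_pos_pos) auto
    have "a3 + n = (\<beta> - \<gamma> + 2) * n / 2" by (simp add: a3_def field_simps)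
    thus ?thesis using h by linarith
  qed
  obtain c1 C1 where cC1: "c1 > 0" "C1 > 0" "\<And>(y::real^'n) R. R > 0 \<Longrightarrow>
     c1 * (R ^ CARD('n) * max R (norm y) powr (-\<gamma>)) \<le> (LINT x : ball y R | lborel. norm x powr (-\<gamma>)) \<and>
     (LINT x : ball y R | lborel. norm x powr (-\<gamma>)) \<le> C1 * (R ^ CARD('n) * max R (norm y) powr (-\<gamma>))"
    using I_bounds[of "-\<gamma>", where 'n='n] assms(2) by auto
  obtain c2 C2 where cC2: "c2 > 0" "C2 > 0" "\<And>(y::real^'n) R. R > 0 \<Longrightarrow>
     c2 * (R ^ CARD('n) * max R (norm y) powr (-\<beta>)) \<le> (LINT x : ball y R | lborel. norm x powr (-\<beta>)) \<and>
     (LINT x : ball y R | lborel. norm x powr (-\<beta>)) \<le> C2 * (R ^ CARD('n) * max R (norm y) powr (-\<beta>))"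
    using I_bounds[of "-\<beta>", where 'n='n] bN unfolding n_def by auto
  obtain c3 C3 where cC3: "c3 > 0" "C3 > 0" "\<And>(y::real^'n) R. R > 0 \<Longrightarrow>
     c3 * (R ^ CARD('n) * max R (norm y) powr a3) \<le> (LINT x : ball y R | lborel. norm x powr a3) \<and>
     (LINT x : ball y R | lborel. norm x powr a3) \<le> C3 * (R ^ CARD('n) * max R (norm y) powr a3)"
    using I_bounds[of a3, where 'n='n] a3 unfolding n_def by auto
  define e where "e = 2 / n"
  have epos: "e > 0" using n3 by (simp add: e_def)
  define p1 where "p1 = c3 powr e"
  define p2 where "p2 = C3 powr e"
  define q1 where "q1 = c1 / C2"
  define q2 where "q2 = C1 / c2"
  have pos: "p1 > 0" "p2 > 0" "q1 > 0" "q2 > 0"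
    using cC1(1,2) cC2(1,2) cC3(1,2) by (auto simp: p1_def p2_def q1_def q2_def)
  define k16 where "k16 = max (p2/q1) (q2/p1)"
  define k18 where "k18 = max p2 (1/p1)"
  have kpos: "k16 > 0" "k18 > 0" using pos by (auto simp: k16_def k18_def less_max_iff_disj)
  have ALL: "\<forall>(y::real^'n) R. R > 0 \<longrightarrow> (rho_w \<gamma> \<beta> y R / k16 \<le> R\<^sup>2 * mu_w \<gamma> (ball y R) / mu_w \<beta> (ball y R)
      \<and> R\<^sup>2 * mu_w \<gamma> (ball y R) / mu_w \<beta> (ball y R) \<le> k16 * rho_w \<gamma> \<beta> y R)
   \<and> (R\<^sup>2 * (max R (norm y)) powr (\<beta> - \<gamma>) / k18 \<le> rho_w \<gamma> \<beta> y R
      \<and> rho_w \<gamma> \<beta> y R \<le> k18 * R\<^sup>2 * (max R (norm y)) powr (\<beta> - \<gamma>))"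
  proof (intro allI impI)
    fix y :: "real^'n" and R :: real assume R: "R > 0"
    define M where "M = max R (norm y)"
    have M: "M > 0" using R by (auto simp: M_def)
    define P where "P = R\<^sup>2 * M powr (\<beta> - \<gamma>)"
    have Ppos: "P > 0" using R M by (simp add: P_def)
    define X where "X a = R ^ CARD('n) * M powr a" for a
    have Xpos: "X a > 0" for a using R M by (simp add: X_def)
    define I3 where "I3 = (LINT x : ball y R | lborel. norm x powr a3)"
    have rho_eq: "rho_w \<gamma> \<beta> y R = I3 powr e"
      unfolding rho_w_def I3_def e_def a3_def n_def ..
    have I3: "c3 * X a3 \<le> I3" "I3 \<le> C3 * X a3" using cC3(3)[OF R, of y] unfolding I3_def X_def M_def by auto
    have Xe: "X a3 powr e = P"
    proof -
      have "(R ^ CARD('n)) powr e = R powr (real CARD('n) * e)"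
        using R by (simp add: powr_realpow[symmetric] powr_powr)
      also have "real CARD('n) * e = 2" using n3 unfolding e_def n_def by simp
      also have "R powr 2 = R\<^sup>2" using R by (simp add: powr_numeral)
      finally have 1: "(R ^ CARD('n)) powr e = R\<^sup>2" .
      have "(M powr a3) powr e = M powr (a3 * e)" by (simp add: powr_powr)
      also have "a3 * e = \<beta> - \<gamma>" using n3 unfolding a3_def e_def by (simp add: field_simps)
      finally have 2: "(M powr a3) powr e = M powr (\<beta> - \<gamma>)" .
      show ?thesis unfolding X_def P_def powr_mult 1 2 ..
    qed
    have rho1: "p1 * P \<le> rho_w \<gamma> \<beta> y R"
    proof -
      have "p1 * P = (c3 * X a3) powr e" unfolding p1_def powr_mult Xe ..
      also have "\<dots> \<le> I3 powr e" using I3 cC3(1) Xpos[of a3] epos by (intro powr_mono2) auto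
      finally show ?thesis unfolding rho_eq .
    qed
    have rho2: "rho_w \<gamma> \<beta> y R \<le> p2 * P"
    proof -
      have "0 \<le> c3 * X a3" using cC3(1) Xpos[of a3] by simp
      hence "I3 powr e \<le> (C3 * X a3) powr e" using I3 epos
        by (intro powr_mono2) auto
      also have "\<dots> = p2 * P" unfolding p2_def powr_mult Xe ..
      finally show ?thesis unfolding rho_eq .
    qed
    define I1 where "I1 = mu_w \<gamma> (ball y R)"
    define I2 where "I2 = mu_w \<beta> (ball y R)"
    have I1: "c1 * X (-\<gamma>) \<le> I1" "I1 \<le> C1 * X (-\<gamma>)"
      using cC1(3)[OF R, of y] unfolding I1_def X_def M_def mu_w_def by auto
    have I2: "c2 * X (-\<beta>) \<le> I2" "I2 \<le> C2 * X (-\<beta>)"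
      using cC2(3)[OF R, of y] unfolding I2_def X_def M_def mu_w_def by auto
    have I1pos: "I1 > 0" using I1 cC1 Xpos by (meson mult_pos_pos less_le_trans)
    have I2pos: "I2 > 0" using I2 cC2 Xpos by (meson mult_pos_pos less_le_trans)
    have ratio: "R\<^sup>2 * (c * X (-\<gamma>)) / (d * X (-\<beta>)) = c / d * P" if "d > 0" for c d
    proof -
      have "M powr (-\<gamma>) / M powr (-\<beta>) = M powr (\<beta> - \<gamma>)"
        by (simp add: powr_diff[symmetric])
      thus ?thesis using that R M unfolding X_def P_def
        by (simp add: field_simps)
    qed
    have Q1: "q1 * P \<le> R\<^sup>2 * I1 / I2"
    proof -
      have "q1 * P = R\<^sup>2 * (c1 * X (-\<gamma>)) / (C2 * X (-\<beta>))" using ratio[of C2 c1] cC2 by (simp add: q1_def)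
      also have "\<dots> \<le> R\<^sup>2 * I1 / I2"
        using I1 I2 I1pos I2pos R by (intro frac_le mult_left_mono) auto
      finally show ?thesis .
    qed
    have Q2: "R\<^sup>2 * I1 / I2 \<le> q2 * P"
    proof -
      have "R\<^sup>2 * I1 / I2 \<le> R\<^sup>2 * (C1 * X (-\<gamma>)) / (c2 * X (-\<beta>))"
        using I1 I2 I1pos I2pos R cC2 Xpos by (intro frac_le mult_left_mono) auto
      also have "\<dots> = q2 * P" using ratio[of c2 C1] cC2 by (simp add: q2_def)
      finally show ?thesis .
    qed
    have F: "rho_w \<gamma> \<beta> y R / k16 \<le> R\<^sup>2 * I1 / I2 \<and> R\<^sup>2 * I1 / I2 \<le> k16 * rho_w \<gamma> \<beta> y R
      \<and> P / k18 \<le> rho_w \<gamma> \<beta> y R \<and> rho_w \<gamma> \<beta> y R \<le> k18 * P"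
      unfolding k16_def k18_def by (rule final_arith[OF Ppos pos rho1 rho2 Q1 Q2])
    thus "(rho_w \<gamma> \<beta> y R / k16 \<le> R\<^sup>2 * mu_w \<gamma> (ball y R) / mu_w \<beta> (ball y R)
      \<and> R\<^sup>2 * mu_w \<gamma> (ball y R) / mu_w \<beta> (ball y R) \<le> k16 * rho_w \<gamma> \<beta> y R)
   \<and> (R\<^sup>2 * (max R (norm y)) powr (\<beta> - \<gamma>) / k18 \<le> rho_w \<gamma> \<beta> y R
      \<and> rho_w \<gamma> \<beta> y R \<le> k18 * R\<^sup>2 * (max R (norm y)) powr (\<beta> - \<gamma>))"
      unfolding I1_def I2_def P_def M_def by (simp add: mult.assoc)
  qed
  show ?thesis using kpos ALL by blast
qed

end
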